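(* Let $G=(V,E)$ be a connected, locally finite simple graph, let $x\in V$, let $u:V\to\mathbb{R}$ be harmonic, and let $0\le a\le b<\infty$ be integers. Define, for $k\ge 0$, $$N(k) = \sum_{y:\, d(x,y)=k+1} d_{\mathrm{in}}(y)\, u(y)^2 - \sum_{y:\, d(x,y)=k} d_{\mathrm{out}}(y)\, u(y)^2 .$$ If $G$ is locally expansive in $\{v\in V: a\le d(x,v)\le b\}$, i.e. $d_{\mathrm{out}}(v)\ge d_{\mathrm{in}}(v)$ for every $v$ with $a\le d(x,v)\le b$, then $$\sum_{y:\,d(x,y)=b+1} d_{\mathrm{in}}(y)\, u(y)^2 \ge (b-a+1)N(a) + \sum_{y:\,d(x,y)=a} d_{\mathrm{out}}(y)\, u(y)^2.$$ If $G$ is locally contractive in the same region, i.e. $d_{\mathrm{out}}(v)\le d_{\mathrm{in}}(v)$ for every $v$ with $a\le d(x,v)\le b$, then $$\sum_{y:\,d(x,y)=b+1} d_{\mathrm{in}}(y)\, u(y)^2 \le (b-a+1)N(b) + \sum_{y:\,d(x,y)=a} d_{\mathrm{out}}(y)\, u(y)^2.$$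
   Context: $d(\cdot,\cdot)$ is the graph distance. $u$ is harmonic if $\sum_{w:(v,w)\in E}(u(v)-u(w))=0$ for every $v\in V$. With $x$ fixed, $d_{\mathrm{in}}(v)=\#\{w: (w,v)\in E,\ d(w,x)=d(v,x)-1\}$ and $d_{\mathrm{out}}(v)=\#\{w: (w,v)\in E,\ d(w,x)=d(v,x)+1\}$. *)

theory Defs
  imports Main Complex_Main
begin

text \<open>A graph on vertex type 'a is given by an adjacency relation E (vertex set = UNIV).\<close>

inductive walk_len :: "('a \<Rightarrow> 'a \<Rightarrow> bool) \<Rightarrow> nat \<Rightarrow> 'a \<Rightarrow> 'a \<Rightarrow> bool" for E where
  walk_nil: "walk_len E 0 v v"
| walk_step: "walk_len E n v w \<Longrightarrow> E w z \<Longrightarrow> walk_len E (Suc n) v z"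

definition simple_graph :: "('a \<Rightarrow> 'a \<Rightarrow> bool) \<Rightarrow> bool" where
  "simple_graph E \<longleftrightarrow> (\<forall>v w. E v w \<longrightarrow> E w v) \<and> (\<forall>v. \<not> E v v)"

definition locally_finite :: "('a \<Rightarrow> 'a \<Rightarrow> bool) \<Rightarrow> bool" where
  "locally_finite E \<longleftrightarrow> (\<forall>v. finite {w. E v w})"

definition connected_graph :: "('a \<Rightarrow> 'a \<Rightarrow> bool) \<Rightarrow> bool" where
  "connected_graph E \<longleftrightarrow> (\<forall>v w. \<exists>n. walk_len E n v w)"

definition gdist :: "('a \<Rightarrow> 'a \<Rightarrow> bool) \<Rightarrow> 'a \<Rightarrow> 'a \<Rightarrow> nat" where
  "gdist E v w = (LEAST n. walk_len E n v w)"

definition harmonic :: "('a \<Rightarrow> 'a \<Rightarrow> bool) \<Rightarrow> ('a \<Rightarrow> real) \<Rightarrow> bool" where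
  "harmonic E u \<longleftrightarrow> (\<forall>v. (\<Sum>w\<in>{w. E v w}. u v - u w) = 0)"

definition d_in :: "('a \<Rightarrow> 'a \<Rightarrow> bool) \<Rightarrow> 'a \<Rightarrow> 'a \<Rightarrow> nat" where
  "d_in E x v = card {w. E w v \<and> gdist E w x + 1 = gdist E v x}"

definition d_out :: "('a \<Rightarrow> 'a \<Rightarrow> bool) \<Rightarrow> 'a \<Rightarrow> 'a \<Rightarrow> nat" where
  "d_out E x v = card {w. E w v \<and> gdist E w x = gdist E v x + 1}"

definition in_sum :: "('a \<Rightarrow> 'a \<Rightarrow> bool) \<Rightarrow> 'a \<Rightarrow> ('a \<Rightarrow> real) \<Rightarrow> nat \<Rightarrow> real" where
  "in_sum E x u k = (\<Sum>y\<in>{y. gdist E x y = k}. real (d_in E x y) * (u y)\<^sup>2)"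

definition out_sum :: "('a \<Rightarrow> 'a \<Rightarrow> bool) \<Rightarrow> 'a \<Rightarrow> ('a \<Rightarrow> real) \<Rightarrow> nat \<Rightarrow> real" where
  "out_sum E x u k = (\<Sum>y\<in>{y. gdist E x y = k}. real (d_out E x y) * (u y)\<^sup>2)"

definition Nflux :: "('a \<Rightarrow> 'a \<Rightarrow> bool) \<Rightarrow> 'a \<Rightarrow> ('a \<Rightarrow> real) \<Rightarrow> nat \<Rightarrow> real" where
  "Nflux E x u k = in_sum E x u (k + 1) - out_sum E x u k"

end

theory Submission
  imports Defs
begin

lemma walk_prepend: "walk_len E n w z \<Longrightarrow> E v w \<Longrightarrow> walk_len E (Suc n) v z"
  by (induction rule: walk_len.induct) (auto intro: walk_len.intros)

lemma walk_rev: "walk_len E n v w \<Longrightarrow> (\<forall>a b. E a b \<longrightarrow> E b a) \<Longrightarrow> walk_len E n w v"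
  by (induction rule: walk_len.induct) (auto intro: walk_len.intros walk_prepend)

lemma walk_zero: "walk_len E 0 v w \<Longrightarrow> v = w"
  by (erule walk_len.cases) auto

lemma walk_suc: "walk_len E (Suc n) v z \<Longrightarrow> \<exists>w. walk_len E n v w \<and> E w z"
  by (erule walk_len.cases) auto

locale G =
  fixes E :: "'a \<Rightarrow> 'a \<Rightarrow> bool" and x :: 'a and u :: "'a \<Rightarrow> real"
  assumes sg: "simple_graph E" and lf: "locally_finite E" and cg: "connected_graph E"
    and hm: "harmonic E u"
begin

lemma sym: "E a b \<Longrightarrow> E b a" using sg unfolding simple_graph_def by blast

lemma gwalk: "walk_len E (gdist E v w) v w"
  unfolding gdist_def using cg unfolding connected_graph_def by (meson LeastI_ex)

lemma gmin: "walk_len E n v w \<Longrightarrow> gdist E v w \<le> n"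
  unfolding gdist_def by (rule Least_le)

lemma gsym: "gdist E v w = gdist E w v"
proof -
  have "gdist E v w \<le> gdist E w v" for v w
    using gmin[OF walk_rev[OF gwalk[of w v]]] sym by blast
  thus ?thesis by (simp add: le_antisym)
qed

lemma gtri: "E v w \<Longrightarrow> gdist E y w \<le> gdist E y v + 1"
  using gmin[OF walk_step[OF gwalk[of y v]]] by simp

lemma gadj: "E v w \<Longrightarrow> gdist E y v \<le> gdist E y w + 1 \<and> gdist E y w \<le> gdist E y v + 1"
  using gtri sym by blast

lemma gpred: "gdist E y v = Suc k \<Longrightarrow> \<exists>w. E w v \<and> gdist E y w = k"
proof -
  assume h: "gdist E y v = Suc k"
  from walk_suc[OF gwalk[of y v, unfolded h]] obtain w where w: "walk_len E k y w" "E w v" by blast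
  have "gdist E y w \<le> k" using gmin[OF w(1)] .
  moreover have "gdist E y v \<le> gdist E y w + 1" using gtri[OF w(2)] .
  ultimately show ?thesis using w h by (intro exI[of _ w]) auto
qed

lemma gzero: "gdist E y v = 0 \<longleftrightarrow> v = y"
proof
  assume "gdist E y v = 0" thus "v = y" using walk_zero gwalk[of y v] by metis
next
  assume "v = y" thus "gdist E y v = 0" using gmin[OF walk_nil[of E y]] by simp
qed

abbreviation S where "S k \<equiv> {y. gdist E x y = k}"

lemma nbfin: "finite {w. E v w}" using lf unfolding locally_finite_def by blast

lemma Sfin: "finite (S k)"
proof (induction k)
  case 0
  have "S 0 = {x}" using gzero by auto
  thus ?case by simp
next
  case (Suc k)
  have "S (Suc k) \<subseteq> (\<Union>w\<in>S k. {z. E w z})" using gpred by blast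
  moreover have "finite (\<Union>w\<in>S k. {z. E w z})" using Suc nbfin by blast
  ultimately show ?case by (rule finite_subset)
qed

definition NN where
  "NN k = (\<Sum>w\<in>S k. \<Sum>y\<in>{y\<in>S (Suc k). E w y}. (u y)\<^sup>2 - (u w)\<^sup>2)"

lemma out_eq: "out_sum E x u k = (\<Sum>w\<in>S k. \<Sum>y\<in>{y\<in>S (Suc k). E w y}. (u w)\<^sup>2)"
  unfolding out_sum_def d_out_def
proof (rule sum.cong[OF refl])
  fix w assume w: "w \<in> S k"
  have "{y. E y w \<and> gdist E y x = gdist E w x + 1} = {y\<in>S (Suc k). E w y}"
    using w gsym sym by auto
  thus "real (card {y. E y w \<and> gdist E y x = gdist E w x + 1}) * (u w)\<^sup>2 =
        (\<Sum>y\<in>{y\<in>S (Suc k). E w y}. (u w)\<^sup>2)" by simp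
qed

lemma in_eq: "in_sum E x u (Suc k) = (\<Sum>w\<in>S k. \<Sum>y\<in>{y\<in>S (Suc k). E w y}. (u y)\<^sup>2)"
proof -
  have "in_sum E x u (Suc k) = (\<Sum>y\<in>S (Suc k). \<Sum>w\<in>{w\<in>S k. E w y}. (u y)\<^sup>2)"
    unfolding in_sum_def d_in_def
  proof (rule sum.cong[OF refl])
    fix y assume y: "y \<in> S (Suc k)"
    have "{w. E w y \<and> gdist E w x + 1 = gdist E y x} = {w\<in>S k. E w y}"
      using y gsym by auto
    thus "real (card {w. E w y \<and> gdist E w x + 1 = gdist E y x}) * (u y)\<^sup>2 =
        (\<Sum>w\<in>{w\<in>S k. E w y}. (u y)\<^sup>2)" by simp
  qed
  also have "\<dots> = (\<Sum>w\<in>S k. \<Sum>y\<in>{y\<in>S (Suc k). E w y}. (u y)\<^sup>2)"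
    by (rule sum.swap_restrict[OF Sfin Sfin, symmetric])
  finally show ?thesis .
qed

lemma Nflux_eq: "Nflux E x u k = NN k"
  unfolding Nflux_def NN_def using in_eq[of k] out_eq[of k]
  by (simp add: sum_subtractf)

lemma subharm: "(\<Sum>w\<in>{w. E v w}. (u w)\<^sup>2 - (u v)\<^sup>2) \<ge> 0"
proof -
  have h: "(\<Sum>w\<in>{w. E v w}. u v - u w) = 0" using hm unfolding harmonic_def by blast
  have "(\<Sum>w\<in>{w. E v w}. (u w)\<^sup>2 - (u v)\<^sup>2) =
        (\<Sum>w\<in>{w. E v w}. (u w - u v)\<^sup>2 - 2 * u v * (u v - u w))"
    by (rule sum.cong) (auto simp: power2_eq_square algebra_simps)
  also have "\<dots> = (\<Sum>w\<in>{w. E v w}. (u w - u v)\<^sup>2) - 2 * u v * (\<Sum>w\<in>{w. E v w}. u v - u w)"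
    unfolding sum_distrib_left by (rule sum_subtractf)
  also have "\<dots> \<ge> 0" using h by (simp add: sum_nonneg)
  finally show ?thesis .
qed

lemma NN_mono_step: "NN k \<le> NN (Suc k)"
proof -
  let ?f = "\<lambda>v w. (u w)\<^sup>2 - (u v)\<^sup>2"
  have split: "(\<Sum>w\<in>{w. E v w}. ?f v w) =
      (\<Sum>w\<in>{w\<in>S k. E v w}. ?f v w) + (\<Sum>w\<in>{w\<in>S (Suc k). E v w}. ?f v w)
      + (\<Sum>w\<in>{w\<in>S (Suc (Suc k)). E v w}. ?f v w)" if v: "v \<in> S (Suc k)" for v
  proof -
    have eq: "{w. E v w} = ({w\<in>S k. E v w} \<union> {w\<in>S (Suc k). E v w}) \<union> {w\<in>S (Suc (Suc k)). E v w}"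
    proof (intro set_eqI iffI)
      fix w assume "w \<in> {w. E v w}"
      then have "E v w" by simp
      from gadj[OF this, of x] v show "w \<in> ({w\<in>S k. E v w} \<union> {w\<in>S (Suc k). E v w}) \<union> {w\<in>S (Suc (Suc k)). E v w}"
        using \<open>E v w\<close> by auto
    qed auto
    have f1: "finite {w\<in>S k. E v w}" "finite {w\<in>S (Suc k). E v w}" "finite {w\<in>S (Suc (Suc k)). E v w}"
      using Sfin by auto
    show ?thesis unfolding eq
      by (subst sum.union_disjoint) (use f1 in \<open>auto intro!: sum.union_disjoint\<close>)
  qed
  have "0 \<le> (\<Sum>v\<in>S (Suc k). \<Sum>w\<in>{w. E v w}. ?f v w)"
    using subharm by (simp add: sum_nonneg)
  also have "\<dots> = (\<Sum>v\<in>S (Suc k). \<Sum>w\<in>{w\<in>S k. E v w}. ?f v w)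
      + (\<Sum>v\<in>S (Suc k). \<Sum>w\<in>{w\<in>S (Suc k). E v w}. ?f v w)
      + (\<Sum>v\<in>S (Suc k). \<Sum>w\<in>{w\<in>S (Suc (Suc k)). E v w}. ?f v w)"
    using split by (simp add: sum.distrib)
  finally have main: "0 \<le> (\<Sum>v\<in>S (Suc k). \<Sum>w\<in>{w\<in>S k. E v w}. ?f v w)
      + (\<Sum>v\<in>S (Suc k). \<Sum>w\<in>{w\<in>S (Suc k). E v w}. ?f v w)
      + (\<Sum>v\<in>S (Suc k). \<Sum>w\<in>{w\<in>S (Suc (Suc k)). E v w}. ?f v w)" .
  have A: "(\<Sum>v\<in>S (Suc k). \<Sum>w\<in>{w\<in>S (Suc (Suc k)). E v w}. ?f v w) = NN (Suc k)"
    unfolding NN_def by simp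
  have "(\<Sum>v\<in>S (Suc k). \<Sum>w\<in>{w\<in>S k. E v w}. ?f v w)
      = (\<Sum>w\<in>S k. \<Sum>v\<in>{v\<in>S (Suc k). E v w}. ?f v w)"
    by (rule sum.swap_restrict[OF Sfin Sfin])
  also have "\<dots> = (\<Sum>w\<in>S k. \<Sum>v\<in>{v\<in>S (Suc k). E w v}. ?f v w)"
    using sym by (intro sum.cong refl arg_cong[where f="\<lambda>A. sum _ A"]) blast
  also have "\<dots> = - NN k" unfolding NN_def
    by (simp add: sum_negf[symmetric])
  finally have B: "(\<Sum>v\<in>S (Suc k). \<Sum>w\<in>{w\<in>S k. E v w}. ?f v w) = - NN k" .
  let ?C = "(\<Sum>v\<in>S (Suc k). \<Sum>w\<in>{w\<in>S (Suc k). E v w}. ?f v w)"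
  have "?C = (\<Sum>w\<in>S (Suc k). \<Sum>v\<in>{v\<in>S (Suc k). E v w}. ?f v w)"
    by (rule sum.swap_restrict[OF Sfin Sfin])
  also have "\<dots> = (\<Sum>w\<in>S (Suc k). \<Sum>v\<in>{v\<in>S (Suc k). E w v}. ?f v w)"
    using sym by (intro sum.cong refl arg_cong[where f="\<lambda>A. sum _ A"]) blast
  also have "\<dots> = - ?C"
    by (simp add: sum_negf[symmetric])
  finally have C: "?C = 0" by simp
  show ?thesis using main A B C by simp
qed

lemma NN_mono: "k \<le> m \<Longrightarrow> NN k \<le> NN m"
  by (rule lift_Suc_mono_le[of NN, OF NN_mono_step])

lemma in_out: "in_sum E x u (Suc k) = NN k + out_sum E x u k"
  using Nflux_eq[of k] unfolding Nflux_def by simp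

lemma out_ge_in:
  assumes "\<And>v. gdist E x v = k \<Longrightarrow> d_out E x v \<ge> d_in E x v"
  shows "out_sum E x u k \<ge> in_sum E x u k"
  unfolding out_sum_def in_sum_def
  by (rule sum_mono) (use assms in \<open>auto intro!: mult_right_mono\<close>)

lemma out_le_in:
  assumes "\<And>v. gdist E x v = k \<Longrightarrow> d_out E x v \<le> d_in E x v"
  shows "out_sum E x u k \<le> in_sum E x u k"
  unfolding out_sum_def in_sum_def
  by (rule sum_mono) (use assms in \<open>auto intro!: mult_right_mono\<close>)

end

theorem corollary1:
  fixes E :: "'a \<Rightarrow> 'a \<Rightarrow> bool" and x :: 'a and u :: "'a \<Rightarrow> real" and a b :: nat
  assumes "simple_graph E" and "locally_finite E" and "connected_graph E"
    and "harmonic E u" and "a \<le> b"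
  shows "((\<forall>v. a \<le> gdist E x v \<and> gdist E x v \<le> b \<longrightarrow> d_out E x v \<ge> d_in E x v) \<longrightarrow>
            in_sum E x u (b + 1) \<ge> real (b - a + 1) * Nflux E x u a + out_sum E x u a)
       \<and> ((\<forall>v. a \<le> gdist E x v \<and> gdist E x v \<le> b \<longrightarrow> d_out E x v \<le> d_in E x v) \<longrightarrow>
            in_sum E x u (b + 1) \<le> real (b - a + 1) * Nflux E x u b + out_sum E x u a)"
proof -
  interpret G E x u using assms(1-4) by unfold_locales
  have P1: "in_sum E x u (Suc (a + j)) \<ge> real (j + 1) * NN a + out_sum E x u a"
    if h: "\<forall>v. a \<le> gdist E x v \<and> gdist E x v \<le> b \<longrightarrow> d_out E x v \<ge> d_in E x v"
      and j: "a + j \<le> b" for j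
    using j
  proof (induction j)
    case 0
    then show ?case using in_out[of a] by simp
  next
    case (Suc j)
    have o: "out_sum E x u (Suc (a + j)) \<ge> in_sum E x u (Suc (a + j))"
    proof (rule out_ge_in)
      fix v assume "gdist E x v = Suc (a + j)"
      thus "d_out E x v \<ge> d_in E x v" using h[rule_format, of v] Suc.prems by simp
    qed
    have n: "NN a \<le> NN (Suc (a + j))" by (rule NN_mono) simp
    have "in_sum E x u (Suc (a + Suc j)) = NN (Suc (a + j)) + out_sum E x u (Suc (a + j))"
      using in_out by simp
    then show ?case using Suc o n by (simp add: algebra_simps)
  qed
  have P2: "in_sum E x u (Suc (a + j)) \<le> real (j + 1) * NN b + out_sum E x u a"
    if h: "\<forall>v. a \<le> gdist E x v \<and> gdist E x v \<le> b \<longrightarrow> d_out E x v \<le> d_in E x v"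
      and j: "a + j \<le> b" for j
    using j
  proof (induction j)
    case 0
    then show ?case using in_out[of a] NN_mono[of a b] by simp
  next
    case (Suc j)
    have o: "out_sum E x u (Suc (a + j)) \<le> in_sum E x u (Suc (a + j))"
    proof (rule out_le_in)
      fix v assume "gdist E x v = Suc (a + j)"
      thus "d_out E x v \<le> d_in E x v" using h[rule_format, of v] Suc.prems by simp
    qed
    have n: "NN (Suc (a + j)) \<le> NN b" using Suc.prems by (intro NN_mono) simp
    have "in_sum E x u (Suc (a + Suc j)) = NN (Suc (a + j)) + out_sum E x u (Suc (a + j))"
      using in_out by simp
    then show ?case using Suc o n by (simp add: algebra_simps)
  qed
  have e: "Suc (a + (b - a)) = b + 1" "real (b - a + 1) = real (b - a + 1)" using assms(5) by auto
  show ?thesis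
  proof (intro conjI impI)
    assume h: "\<forall>v. a \<le> gdist E x v \<and> gdist E x v \<le> b \<longrightarrow> d_out E x v \<ge> d_in E x v"
    show "in_sum E x u (b + 1) \<ge> real (b - a + 1) * Nflux E x u a + out_sum E x u a"
      using P1[OF h, of "b - a"] e(1) Nflux_eq[of a] assms(5) by simp
  next
    assume h: "\<forall>v. a \<le> gdist E x v \<and> gdist E x v \<le> b \<longrightarrow> d_out E x v \<le> d_in E x v"
    show "in_sum E x u (b + 1) \<le> real (b - a + 1) * Nflux E x u b + out_sum E x u a"
      using P2[OF h, of "b - a"] e(1) Nflux_eq[of b] assms(5) by simp
  qed
qed

end
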